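(* Let $K$ be a complete discretely valued field with ring of integers $\mathcal{O}_K$. Let $F\in\mathcal{O}_K[x,y]$ be homogeneous of degree $n$ with $F(x,1)$ monic, let $L$ be the splitting field of $F(x,1)$ over $K$ with normalized valuation $v$, and let $\alpha_1,\dots,\alpha_n$ be the roots of $F(x,1)$ in $L$. Let $h\in\mathcal{O}_K$ with $v(h)>0$. Let $(a,b),(a',b')\in\mathcal{O}_K^2$ be primitive solutions of $F(x,y)=h$ (i.e. $a\mathcal{O}_K+b\mathcal{O}_K=a'\mathcal{O}_K+b'\mathcal{O}_K=\mathcal{O}_K$). Suppose that for some index $i$, $v(a-\alpha_ib)=\max_j v(a-\alpha_jb)$ and $v(a'-\alpha_ib')=\max_j v(a'-\alpha_jb')$. Then $v(a-\alpha_ib)=v(a'-\alpha_ib')$. *)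

theory Defs
  imports "HOL-Computational_Algebra.Polynomial" "HOL-Library.Extended_Real"
begin

text \<open>A normalized discrete valuation on the field L (the whole type 'l),
  with values in the integers together with infinity for 0.\<close>
definition normalized_discrete_valuation :: "('l::field \<Rightarrow> ereal) \<Rightarrow> bool" where
  "normalized_discrete_valuation v \<longleftrightarrow>
     (\<forall>x. v x = \<infinity> \<longleftrightarrow> x = 0) \<and>
     (\<forall>x. x \<noteq> 0 \<longrightarrow> (\<exists>k::int. v x = ereal (of_int k))) \<and>
     (\<forall>x y. v (x * y) = v x + v y) \<and>
     (\<forall>x y. min (v x) (v y) \<le> v (x + y)) \<and>
     (\<exists>\<pi>. v \<pi> = 1)"

definition is_subfield :: "'l::field set \<Rightarrow> bool" where
  "is_subfield S \<longleftrightarrow> 0 \<in> S \<and> 1 \<in> S \<and>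
     (\<forall>x\<in>S. \<forall>y\<in>S. x + y \<in> S \<and> x - y \<in> S \<and> x * y \<in> S) \<and>
     (\<forall>x\<in>S. inverse x \<in> S)"

definition complete_nontrivial_on :: "('l::field \<Rightarrow> ereal) \<Rightarrow> 'l set \<Rightarrow> bool" where
  "complete_nontrivial_on v K \<longleftrightarrow>
     (\<exists>x\<in>K. x \<noteq> 0 \<and> v x \<noteq> 0) \<and>
     (\<forall>s::nat \<Rightarrow> 'l. (\<forall>m. s m \<in> K) \<longrightarrow>
        (\<forall>M::int. \<exists>N. \<forall>m\<ge>N. \<forall>k\<ge>N. ereal (of_int M) \<le> v (s m - s k)) \<longrightarrow>
        (\<exists>l\<in>K. \<forall>M::int. \<exists>N. \<forall>m\<ge>N. ereal (of_int M) \<le> v (s m - l)))"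

definition ring_of_integers :: "('l::field \<Rightarrow> ereal) \<Rightarrow> 'l set \<Rightarrow> 'l set" where
  "ring_of_integers v K = {x \<in> K. 0 \<le> v x}"

definition generated_by :: "'l::field set \<Rightarrow> 'l set \<Rightarrow> bool" where
  "generated_by K R \<longleftrightarrow> (\<forall>S. is_subfield S \<and> K \<subseteq> S \<and> R \<subseteq> S \<longrightarrow> S = UNIV)"

text \<open>The binary form of degree n whose dehomogenization F(x,1) is f:
  F(x,y) = sum_k coeff f k * x^k * y^(n-k).\<close>
definition hom_eval :: "'l::comm_ring_1 poly \<Rightarrow> nat \<Rightarrow> 'l \<Rightarrow> 'l \<Rightarrow> 'l" where
  "hom_eval f n x y = (\<Sum>k\<le>n. coeff f k * x ^ k * y ^ (n - k))"

end

theory Submission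
  imports Defs
begin

lemma sum_strict_ereal:
  fixes e e' :: "'a \<Rightarrow> ereal"
  assumes "finite S" "i \<in> S" "\<forall>j\<in>S. e j \<le> e' j" "e i < e' i" "\<forall>j\<in>S. \<bar>e j\<bar> \<noteq> \<infinity>"
  shows "sum e S < sum e' S"
proof -
  have fin: "\<bar>sum e (S - {i})\<bar> \<noteq> \<infinity>"
  proof -
    have "sum e (S - {i}) = sum (\<lambda>j. ereal (real_of_ereal (e j))) (S - {i})"
      using assms(5) by (intro sum.cong) (auto simp: ereal_real)
    then show ?thesis by (simp add: sum_ereal)
  qed
  have le: "sum e (S - {i}) \<le> sum e' (S - {i})" using assms(3) by (intro sum_mono) auto
  have "sum e S = e i + sum e (S - {i})" using assms(1,2) by (simp add: sum.remove)
  also have "\<dots> < e' i + sum e (S - {i})"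
    using ereal_less_add[OF fin assms(4)] by (simp add: add.commute)
  also have "\<dots> \<le> e' i + sum e' (S - {i})" using le by (rule add_left_mono)
  also have "\<dots> = sum e' S" using assms(1,2) by (simp add: sum.remove)
  finally show ?thesis .
qed

context fixes v :: "'l::field \<Rightarrow> ereal" assumes val: "normalized_discrete_valuation v"
begin

lemma v_zero: "v 0 = \<infinity>" using val unfolding normalized_discrete_valuation_def by auto
lemma v_inf_iff: "v x = \<infinity> \<longleftrightarrow> x = 0" using val unfolding normalized_discrete_valuation_def by auto
lemma v_mult: "v (x * y) = v x + v y" using val unfolding normalized_discrete_valuation_def by auto
lemma v_add: "min (v x) (v y) \<le> v (x + y)" using val unfolding normalized_discrete_valuation_def by auto
lemma v_fin: "x \<noteq> 0 \<Longrightarrow> \<bar>v x\<bar> \<noteq> \<infinity>"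
  using val unfolding normalized_discrete_valuation_def by force
lemma v_not_minf: "v x \<noteq> -\<infinity>"
  using v_fin[of x] v_zero by (cases "x = 0") auto

lemma v_one: "v 1 = 0"
proof -
  have "v 1 = v 1 + v 1" using v_mult[of 1 1] by simp
  moreover have "\<bar>v 1\<bar> \<noteq> \<infinity>" using v_fin by simp
  ultimately show ?thesis by (cases "v 1") auto
qed

lemma v_m1: "v (-1) = 0"
proof -
  have "v 1 = v (-1) + v (-1)" using v_mult[of "-1" "-1"] by simp
  moreover have "\<bar>v (-1)\<bar> \<noteq> \<infinity>" using v_fin by simp
  ultimately show ?thesis using v_one by (cases "v (-1)") auto
qed

lemma v_uminus: "v (- x) = v x"
  using v_mult[of "-1" x] v_m1 by simp

lemma v_diff: "min (v x) (v y) \<le> v (x - y)"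
  using v_add[of x "-y"] v_uminus[of y] by simp


lemma v_power0: "v x = 0 \<Longrightarrow> v (x ^ m) = 0"
  by (induction m) (auto simp: v_one v_mult)

lemma v_power_nonneg: "0 \<le> v x \<Longrightarrow> 0 \<le> v (x ^ m)"
  by (induction m) (auto simp: v_one v_mult)

lemma v_power_pos: "0 < v x \<Longrightarrow> m > 0 \<Longrightarrow> 0 < v (x ^ m)"
proof (induction m)
  case (Suc m)
  have "0 \<le> v (x ^ m)" using Suc.prems by (intro v_power_nonneg) auto
  then show ?case using Suc.prems by (simp add: v_mult add_pos_nonneg)
qed simp

lemma v_prod: "finite S \<Longrightarrow> v (prod g S) = sum (\<lambda>j. v (g j)) S"
  by (induction S rule: finite_induct) (auto simp: v_one v_mult)

lemma v_sum_pos: "finite S \<Longrightarrow> \<forall>k\<in>S. 0 < v (g k) \<Longrightarrow> 0 < v (sum g S)"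
proof (induction S rule: finite_induct)
  case empty then show ?case by (simp add: v_zero)
next
  case (insert x F)
  then have "0 < min (v (g x)) (v (sum g F))" by auto
  also have "\<dots> \<le> v (sum g (insert x F))" using insert v_add by simp
  finally show ?case .
qed

lemma vb_zero:
  assumes f_coeffs: "\<forall>k. 0 \<le> v (coeff f k)"
    and f_deg: "degree f = n" and f_monic: "lead_coeff f = 1" and n: "n > 0"
    and h_pos: "v h > 0" and ab: "0 \<le> v a" "0 \<le> v b"
    and prim: "\<exists>u. \<exists>w. 0 \<le> v u \<and> 0 \<le> v w \<and> u * a + w * b = 1"
    and sol: "hom_eval f n a b = h"
  shows "v b = 0"
proof (rule ccontr)
  assume "v b \<noteq> 0"
  with ab have vb: "0 < v b" by simp
  obtain u w where uw: "0 \<le> v u" "0 \<le> v w" "u * a + w * b = 1" using prim by blast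
  have "0 = v (u * a + w * b)" using uw v_one by simp
  also have "min (v (u*a)) (v (w*b)) \<le> \<dots>" by (rule v_add)
  finally have m: "min (v u + v a) (v w + v b) \<le> 0" by (simp add: v_mult)
  have "0 < v w + v b" using uw vb by (simp add: add_nonneg_pos)
  with m have "v u + v a \<le> 0" by (auto simp: min_def split: if_splits)
  with uw ab have va: "v a = 0"
  proof -
    have "v a \<le> v u + v a" using add_increasing[OF uw(1) order.refl] .
    then show ?thesis using \<open>v u + v a \<le> 0\<close> ab(1) by (rule_tac antisym) auto
  qed
  define s where "s = (\<Sum>k<n. coeff f k * a ^ k * b ^ (n - k))"
  have cn: "coeff f n = 1" using f_deg f_monic by simp
  have hs: "h = a ^ n + s" unfolding s_def sol[symmetric] hom_eval_def
    by (simp add: lessThan_Suc_atMost[symmetric] cn)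
  have "0 < v s" unfolding s_def
  proof (rule v_sum_pos, simp, intro ballI)
    fix k assume "k \<in> {..<n}"
    then have "0 < v (b ^ (n-k))" using vb by (intro v_power_pos) auto
    moreover have "0 \<le> v (coeff f k * a ^ k)" using f_coeffs ab v_power_nonneg
      by (simp add: v_mult)
    ultimately show "0 < v (coeff f k * a ^ k * b ^ (n - k))"
      by (simp add: v_mult add_nonneg_pos)
  qed
  have "a ^ n = h + (- s)" using hs by simp
  then have "min (v h) (v (-s)) \<le> v (a ^ n)" using v_add by metis
  then have "0 < v (a ^ n)" using h_pos \<open>0 < v s\<close> v_uminus[of s]
    by (cases "v h \<le> v s") (auto simp: min_def intro: less_le_trans)
  with v_power0[OF va] show False by simp
qed

lemma one_sol:
  assumes f_deg: "degree f = n" and f_split: "f = (\<Prod>j<n. [:- \<alpha> j, 1:])"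
    and vb: "v b = 0" and sol: "hom_eval f n a b = h"
  shows "sum (\<lambda>j. v (a / b - \<alpha> j)) {..<n} = v h"
    and "\<And>j. v (a - \<alpha> j * b) = v (a / b - \<alpha> j)"
proof -
  have b0: "b \<noteq> 0" using vb v_zero by auto
  have "h = b ^ n * poly f (a / b)"
    unfolding sol[symmetric] hom_eval_def poly_altdef f_deg sum_distrib_left
  proof (rule sum.cong, simp)
    fix k assume "k \<in> {..n}"
    then have "b ^ n = b ^ k * b ^ (n - k)" by (simp add: power_add[symmetric])
    then show "coeff f k * a ^ k * b ^ (n - k) = b ^ n * (coeff f k * (a / b) ^ k)"
      using b0 by (simp add: power_divide field_simps)
  qed
  also have "poly f (a / b) = (\<Prod>j<n. a / b - \<alpha> j)" by (subst f_split) (simp add: poly_prod)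
  finally have "v h = v (b ^ n) + sum (\<lambda>j. v (a / b - \<alpha> j)) {..<n}"
    by (simp add: v_mult v_prod)
  then show "sum (\<lambda>j. v (a / b - \<alpha> j)) {..<n} = v h" using v_power0[OF vb] by simp
  fix j
  have "a - \<alpha> j * b = b * (a / b - \<alpha> j)" using b0 by (simp add: field_simps)
  then show "v (a - \<alpha> j * b) = v (a / b - \<alpha> j)" by (simp add: v_mult vb)
qed

lemma half:
  assumes S: "finite S" "i \<in> S"
    and sums: "sum (\<lambda>j. v (x - \<alpha> j)) S = sum (\<lambda>j. v (y - \<alpha> j)) S"
    and mx: "\<forall>j\<in>S. v (x - \<alpha> j) \<le> v (x - \<alpha> i)"
    and lt: "v (x - \<alpha> i) < v (y - \<alpha> i)"
  shows False
proof -
  have xy: "v (x - \<alpha> i) \<le> v (y - x)"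
  proof -
    have "y - x = (y - \<alpha> i) - (x - \<alpha> i)" by simp
    then have "min (v (y - \<alpha> i)) (v (x - \<alpha> i)) \<le> v (y - x)" using v_diff by metis
    then show ?thesis using lt by (simp add: min_def split: if_splits)
  qed
  have le: "\<forall>j\<in>S. v (x - \<alpha> j) \<le> v (y - \<alpha> j)"
  proof
    fix j assume j: "j \<in> S"
    have "y - \<alpha> j = (y - x) + (x - \<alpha> j)" by simp
    then have "min (v (y - x)) (v (x - \<alpha> j)) \<le> v (y - \<alpha> j)" using v_add by metis
    moreover have "v (x - \<alpha> j) \<le> v (y - x)" using mx j xy by (meson order_trans)
    ultimately show "v (x - \<alpha> j) \<le> v (y - \<alpha> j)" by (simp add: min_def split: if_splits)
  qed
  have fin: "\<forall>j\<in>S. \<bar>v (x - \<alpha> j)\<bar> \<noteq> \<infinity>"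
  proof
    fix j assume "j \<in> S"
    then have "v (x - \<alpha> j) \<le> v (x - \<alpha> i)" using mx by blast
    then have "v (x - \<alpha> j) < v (y - \<alpha> i)" using lt by (rule order.strict_trans1)
    then have "v (x - \<alpha> j) < \<infinity>" using order.strict_trans2 by fastforce
    then show "\<bar>v (x - \<alpha> j)\<bar> \<noteq> \<infinity>" using v_not_minf[of "x - \<alpha> j"] by auto
  qed
  have "sum (\<lambda>j. v (x - \<alpha> j)) S < sum (\<lambda>j. v (y - \<alpha> j)) S"
    by (rule sum_strict_ereal[OF S le lt fin])
  with sums show False by simp
qed

end

theorem lemma2p3:
  fixes v :: "'l::field \<Rightarrow> ereal" and K :: "'l set" and f :: "'l poly" and n :: nat
    and \<alpha> :: "nat \<Rightarrow> 'l" and h a b a' b' :: 'l and i :: nat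
  assumes val: "normalized_discrete_valuation v"
    and K_sub: "is_subfield K"
    and K_compl: "complete_nontrivial_on v K"
    and f_coeffs: "\<forall>k. coeff f k \<in> ring_of_integers v K"
    and f_deg: "degree f = n" and f_monic: "lead_coeff f = 1"
    and f_split: "f = (\<Prod>j<n. [:- \<alpha> j, 1:])"
    and L_split: "generated_by K (\<alpha> ` {..<n})"
    and h_int: "h \<in> ring_of_integers v K" and h_pos: "v h > 0"
    and ab: "a \<in> ring_of_integers v K" "b \<in> ring_of_integers v K"
    and ab': "a' \<in> ring_of_integers v K" "b' \<in> ring_of_integers v K"
    and prim: "\<exists>u\<in>ring_of_integers v K. \<exists>w\<in>ring_of_integers v K. u * a + w * b = 1"
    and prim': "\<exists>u\<in>ring_of_integers v K. \<exists>w\<in>ring_of_integers v K. u * a' + w * b' = 1"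
    and sol: "hom_eval f n a b = h" and sol': "hom_eval f n a' b' = h"
    and i: "i < n"
    and max: "v (a - \<alpha> i * b) = (MAX j\<in>{..<n}. v (a - \<alpha> j * b))"
    and max': "v (a' - \<alpha> i * b') = (MAX j\<in>{..<n}. v (a' - \<alpha> j * b'))"
  shows "v (a - \<alpha> i * b) = v (a' - \<alpha> i * b')"
  proof -
  have ring: "\<And>x. x \<in> ring_of_integers v K \<Longrightarrow> 0 \<le> v x" by (simp add: ring_of_integers_def)
  have n: "n > 0" using i by simp
  have fc: "\<forall>k. 0 \<le> v (coeff f k)" using f_coeffs ring by blast
  have vb: "v b = 0"
    using vb_zero[OF val fc f_deg f_monic n h_pos ring[OF ab(1)] ring[OF ab(2)] _ sol] prim ring by blast
  have vb': "v b' = 0"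
    using vb_zero[OF val fc f_deg f_monic n h_pos ring[OF ab'(1)] ring[OF ab'(2)] _ sol'] prim' ring by blast
  note o1 = one_sol[OF val f_deg f_split vb sol]
  note o2 = one_sol[OF val f_deg f_split vb' sol']
  have sums: "sum (\<lambda>j. v (a / b - \<alpha> j)) {..<n} = sum (\<lambda>j. v (a' / b' - \<alpha> j)) {..<n}"
    using o1(1) o2(1) by simp
  have mx: "\<forall>j\<in>{..<n}. v (a / b - \<alpha> j) \<le> v (a / b - \<alpha> i)"
    proof
    fix j assume j: "j \<in> {..<n}"
    have "v (a - \<alpha> j * b) \<le> (MAX j\<in>{..<n}. v (a - \<alpha> j * b))"
      using j by (intro Max_ge) auto
    then show "v (a / b - \<alpha> j) \<le> v (a / b - \<alpha> i)" using max o1(2) by simp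
  qed
  have mx': "\<forall>j\<in>{..<n}. v (a' / b' - \<alpha> j) \<le> v (a' / b' - \<alpha> i)"
    proof
    fix j assume j: "j \<in> {..<n}"
    have "v (a' - \<alpha> j * b') \<le> (MAX j\<in>{..<n}. v (a' - \<alpha> j * b'))"
      using j by (intro Max_ge) auto
    then show "v (a' / b' - \<alpha> j) \<le> v (a' / b' - \<alpha> i)" using max' o2(2) by simp
  qed
  have iS: "i \<in> {..<n}" using i by simp
  have "\<not> v (a / b - \<alpha> i) < v (a' / b' - \<alpha> i)"
    using half[OF val finite_lessThan iS sums mx] by blast
  moreover have "\<not> v (a' / b' - \<alpha> i) < v (a / b - \<alpha> i)"
    using half[OF val finite_lessThan iS sums[symmetric] mx'] by blast
  ultimately show ?thesis using o1(2) o2(2) by simp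
qed

end
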